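(* For every $l\in w_{1+\infty}$, $$[\hat l^B,\phi(z)]=-\frac12\big(l_z-\iota(l_z)\big)\cdot\phi(z).$$
   Context: Neutral fermions $\{\phi_i\}_{i\in\mathbb{Z}}$ satisfy $[\phi_i,\phi_j]_+=(-1)^i\delta_{i+j,0}$, acting on the B-type Fock space generated from a vacuum $|0\rangle$ with $\phi_i|0\rangle=0$ for $i<0$; dual vacuum $\langle0|\phi_i=0$ for $i>0$, vacuum expectation with $\langle0|0\rangle=1$, $\langle0|\phi_0|0\rangle=0$. $\phi(z)=\sum_{i\in\mathbb{Z}}\phi_iz^i$; $:\!\phi_i\phi_j\!:\,=\phi_i\phi_j-\langle0|\phi_i\phi_j|0\rangle$. $w_{1+\infty}=\mathrm{span}_{\mathbb{C}}\{z^i\partial_z^j\}$, with involution $\iota(z^k(z\partial_z)^m)=(-z\partial_z)^m(-z)^k$ extended linearly. The B-type realization of $l\in w_{1+\infty}$ is $\hat l^B=\frac12\mathrm{Res}_w\,w^{-1}:\!\phi(z)\,(l_w\cdot\phi(w))\!:\big|_{z=-w}$. *)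

theory Defs
  imports Complex_Main "HOL-Library.Groups_Big_Fun"
begin

text \<open>Operator-valued formal Laurent series in one variable are functions
  int => ('v => 'v) (coefficient of z^n).  The scalar multiplication of the
  complex vector space V (the Fock space) is the parameter sc.\<close>

type_synonym 'v opser = "int \<Rightarrow> 'v \<Rightarrow> 'v"

definition sgn1 :: "int \<Rightarrow> complex" where
  "sgn1 i = (-1) ^ nat \<bar>i\<bar>"

definition sscale :: "(complex \<Rightarrow> 'v \<Rightarrow> 'v) \<Rightarrow> complex \<Rightarrow> 'v opser \<Rightarrow> 'v opser" where
  "sscale sc c F = (\<lambda>n v. sc c (F n v))"

definition sdiff :: "'v::ab_group_add opser \<Rightarrow> 'v opser \<Rightarrow> 'v opser" where
  "sdiff F G = (\<lambda>n v. F n v - G n v)"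

definition zmul :: "int \<Rightarrow> 'v opser \<Rightarrow> 'v opser" where
  "zmul k F = (\<lambda>n. F (n - k))"

definition euler :: "(complex \<Rightarrow> 'v \<Rightarrow> 'v) \<Rightarrow> 'v opser \<Rightarrow> 'v opser" where
  "euler sc F = (\<lambda>n v. sc (of_int n) (F n v))"

text \<open>An element l of w_{1+infinity} is given by its finitely supported coefficients
  d k m in the basis z^k (z d/dz)^m.  Action l.F = sum d k m * z^k (z d/dz)^m F.\<close>
definition w_supp :: "(int \<Rightarrow> nat \<Rightarrow> complex) \<Rightarrow> (int \<times> nat) set" where
  "w_supp d = {(k, m). d k m \<noteq> 0}"

definition w_act :: "(complex \<Rightarrow> 'v \<Rightarrow> 'v::ab_group_add) \<Rightarrow> (int \<Rightarrow> nat \<Rightarrow> complex) \<Rightarrow> 'v opser \<Rightarrow> 'v opser" where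
  "w_act sc d F = (\<lambda>n v. \<Sum>(k, m)\<in>w_supp d. sc (d k m) (zmul k ((euler sc ^^ m) F) n v))"

text \<open>iota(z^k (z d/dz)^m) = (-z d/dz)^m (-z)^k, extended linearly; its action on series\<close>
definition iota_act :: "(complex \<Rightarrow> 'v \<Rightarrow> 'v::ab_group_add) \<Rightarrow> (int \<Rightarrow> nat \<Rightarrow> complex) \<Rightarrow> 'v opser \<Rightarrow> 'v opser" where
  "iota_act sc d F = (\<lambda>n v. \<Sum>(k, m)\<in>w_supp d.
      sc (d k m) (((\<lambda>G. sscale sc (-1) (euler sc G)) ^^ m) (sscale sc (sgn1 k) (zmul k F)) n v))"

definition vev :: "('v \<Rightarrow> complex) \<Rightarrow> 'v \<Rightarrow> ('v \<Rightarrow> 'v) \<Rightarrow> complex" where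
  "vev dvac vac A = dvac (A vac)"

text \<open>two-variable normally ordered product :F(z) G(w): with coefficient of z^a w^b
  equal to :F_a G_b: = F_a G_b - <0|F_a G_b|0>\<close>
definition nprod2 :: "(complex \<Rightarrow> 'v \<Rightarrow> 'v::ab_group_add) \<Rightarrow> ('v \<Rightarrow> complex) \<Rightarrow> 'v
    \<Rightarrow> 'v opser \<Rightarrow> 'v opser \<Rightarrow> int \<Rightarrow> int \<Rightarrow> 'v \<Rightarrow> 'v" where
  "nprod2 sc dvac vac F G = (\<lambda>a b v. F a (G b v) - sc (vev dvac vac (F a \<circ> G b)) v)"

text \<open>substitution z = -w in a two-variable series X(z,w); coefficient of w^n is
  sum_a (-1)^a X_{a, n-a} (pointwise a finite sum on each vector in our setting)\<close>
definition subst_neg :: "(complex \<Rightarrow> 'v \<Rightarrow> 'v::ab_group_add) \<Rightarrow> (int \<Rightarrow> int \<Rightarrow> 'v \<Rightarrow> 'v) \<Rightarrow> 'v opser" where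
  "subst_neg sc X = (\<lambda>n v. Sum_any (\<lambda>a. sc (sgn1 a) (X a (n - a) v)))"

definition res :: "'v opser \<Rightarrow> 'v \<Rightarrow> 'v" where
  "res F = F (-1)"

text \<open>B-type realization  hat l^B = 1/2 Res_w w^(-1) :phi(z) (l_w . phi(w)): |_{z=-w}\<close>
definition hatB :: "(complex \<Rightarrow> 'v \<Rightarrow> 'v::ab_group_add) \<Rightarrow> ('v \<Rightarrow> complex) \<Rightarrow> 'v
    \<Rightarrow> 'v opser \<Rightarrow> (int \<Rightarrow> nat \<Rightarrow> complex) \<Rightarrow> 'v \<Rightarrow> 'v" where
  "hatB sc dvac vac phi d = (\<lambda>v. sc (1/2)
      (res (zmul (-1) (subst_neg sc (nprod2 sc dvac vac phi (w_act sc d phi)))) v))"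

definition fockB :: "(complex \<Rightarrow> 'v \<Rightarrow> 'v::ab_group_add) \<Rightarrow> 'v opser \<Rightarrow> 'v \<Rightarrow> ('v \<Rightarrow> complex) \<Rightarrow> bool" where
  "fockB sc phi vac dvac \<longleftrightarrow>
     vector_space sc \<and>
     (\<forall>i. Vector_Spaces.linear sc sc (phi i)) \<and>
     Vector_Spaces.linear sc (*) dvac \<and>
     (\<forall>i j v. phi i (phi j v) + phi j (phi i v) = (if i + j = 0 then sc (sgn1 i) v else 0)) \<and>
     (\<forall>i<0. phi i vac = 0) \<and>
     (\<forall>i>0. \<forall>v. dvac (phi i v) = 0) \<and>
     dvac vac = 1 \<and> dvac (phi 0 vac) = 0 \<and>
     (\<forall>v. v \<in> module.span sc (range (\<lambda>is. foldr phi is vac)))"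

end

theory Submission
  imports Defs
begin


lemma sgn1_even: "sgn1 i = (if even i then 1 else -1)"
  by (simp add: sgn1_def even_nat_iff)

lemma sgn1_add: "sgn1 (x + y) = sgn1 x * sgn1 y"
  by (auto simp: sgn1_even)

lemma sgn1_minus: "sgn1 (- x) = sgn1 x"
  by (auto simp: sgn1_even)

lemma sgn1_sq: "sgn1 x * sgn1 x = 1"
  by (auto simp: sgn1_even)


lemma coef_id:
  fixes c :: complex
  shows "1/2 * (sgn1 (n - k) * (c * of_int (- n) ^ m) * sgn1 (- n) - sgn1 (- n) * (c * of_int (n - k) ^ m) * sgn1 (- n))
       = - 1/2 * (c * of_int (n - k) ^ m - c * ((- of_int n) ^ m * sgn1 k))"
proof -
  have h1: "sgn1 (n - k) * sgn1 (- n) = sgn1 k" by (auto simp: sgn1_even)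
  have h2: "sgn1 (- n) * sgn1 (- n) = 1" by (rule sgn1_sq)
  have "1/2 * (sgn1 (n - k) * (c * of_int (- n) ^ m) * sgn1 (- n) - sgn1 (- n) * (c * of_int (n - k) ^ m) * sgn1 (- n))
     = 1/2 * (c * of_int (- n) ^ m * (sgn1 (n - k) * sgn1 (- n)) - c * of_int (n - k) ^ m * (sgn1 (- n) * sgn1 (- n)))"
    by (simp add: mult.commute mult.left_commute mult.assoc)
  also have "\<dots> = 1/2 * (c * of_int (- n) ^ m * sgn1 k - c * of_int (n - k) ^ m)"
    by (simp only: h1 h2 mult_1_right)
  also have "\<dots> = - 1/2 * (c * of_int (n - k) ^ m - c * ((- of_int n) ^ m * sgn1 k))"
    by (simp add: algebra_simps)
  finally show ?thesis .
qed

locale fk =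
  fixes sc :: "complex \<Rightarrow> 'v::ab_group_add \<Rightarrow> 'v" and phi :: "'v opser"
    and vac :: 'v and dvac :: "'v \<Rightarrow> complex"
  assumes fock: "fockB sc phi vac dvac"
begin

lemma vs: "vector_space sc" using fock by (simp add: fockB_def)

sublocale vector_space sc by (rule vs)

lemma phi_hom: "module_hom sc sc (phi i)"
  using fock by (simp add: fockB_def module_hom_iff_linear)

lemma dvac_hom: "module_hom sc (*) dvac"
  using fock by (simp add: fockB_def module_hom_iff_linear)

lemma phi_add: "phi i (x + y) = phi i x + phi i y"
  using module_hom.add[OF phi_hom] .
lemma phi_scale: "phi i (sc c x) = sc c (phi i x)"
  using module_hom.scale[OF phi_hom] .
lemma phi_zero[simp]: "phi i 0 = 0"
  using module_hom.zero[OF phi_hom] .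
lemma phi_diff: "phi i (x - y) = phi i x - phi i y"
  using module_hom.diff[OF phi_hom] .
lemma phi_sum: "phi i (sum g A) = (\<Sum>a\<in>A. phi i (g a))"
  using module_hom.sum[OF phi_hom] .
lemma dvac_add: "dvac (x + y) = dvac x + dvac y"
  using module_hom.add[OF dvac_hom] .
lemma dvac_scale: "dvac (sc c x) = c * dvac x"
  using module_hom.scale[OF dvac_hom] .
lemma dvac_zero[simp]: "dvac 0 = 0"
  using module_hom.zero[OF dvac_hom] .
lemma dvac_diff: "dvac (x - y) = dvac x - dvac y"
  using module_hom.diff[OF dvac_hom] .
lemma dvac_sum: "dvac (sum g A) = (\<Sum>a\<in>A. dvac (g a))"
  using module_hom.sum[OF dvac_hom] .

lemma anti_raw: "phi i (phi j v) + phi j (phi i v) = (if i + j = 0 then sc (sgn1 i) v else 0)"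
  using fock unfolding fockB_def by blast

lemma anti: "phi i (phi j v) = (if i + j = 0 then sc (sgn1 i) v else 0) - phi j (phi i v)"
  using anti_raw[of i j v] by (simp add: eq_diff_eq)

lemma vac_ann: "i < 0 \<Longrightarrow> phi i vac = 0"
  using fock unfolding fockB_def by blast
lemma dvac_vac: "dvac vac = 1"
  using fock unfolding fockB_def by blast
lemma spanning: "v \<in> span (range (\<lambda>is. foldr phi is vac))"
  using fock unfolding fockB_def by blast

definition bnd :: "'v \<Rightarrow> bool" where
  "bnd v \<longleftrightarrow> (\<exists>M\<ge>0. \<forall>j. j < - M \<longrightarrow> phi j v = 0)"

lemma bnd_mono_M: "M \<le> M' \<Longrightarrow> (\<forall>j. j < - M \<longrightarrow> phi j v = 0) \<Longrightarrow> (\<forall>j. j < - M' \<longrightarrow> phi j v = 0)"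
  by auto

lemma bnd_foldr: "\<forall>j. j < - (\<Sum>i\<leftarrow>is. \<bar>i\<bar>) \<longrightarrow> phi j (foldr phi is vac) = 0"
proof (induction "is")
  case Nil
  then show ?case by (auto intro: vac_ann)
next
  case (Cons i "is")
  show ?case
  proof (intro allI impI)
    fix j assume j: "j < - (\<Sum>i\<leftarrow>i # is. \<bar>i\<bar>)"
    have s0: "(\<Sum>i\<leftarrow>is. \<bar>i\<bar>) \<ge> 0" by (induction "is") auto
    have "j < - (\<Sum>i\<leftarrow>is. \<bar>i\<bar>)" using j s0 by simp
    hence "phi j (foldr phi is vac) = 0" using Cons by blast
    moreover have "j + i \<noteq> 0" using j s0 by auto
    ultimately show "phi j (foldr phi (i # is) vac) = 0"
      by (simp add: anti[of j i])
  qed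
qed

lemma bnd_all: "bnd v"
proof -
  have "v \<in> span (range (\<lambda>is. foldr phi is vac))" by (rule spanning)
  then show ?thesis
  proof (induction rule: span_induct_alt)
    case base
    then show ?case unfolding bnd_def by (intro exI[of _ 0]) auto
  next
    case (step c x y)
    then obtain "is" where x: "x = foldr phi is vac" by auto
    obtain M where M: "M \<ge> 0" "\<forall>j. j < - M \<longrightarrow> phi j y = 0" using step unfolding bnd_def by blast
    have s0: "(\<Sum>i\<leftarrow>is. \<bar>i\<bar>) \<ge> 0" by (induction "is") auto
    let ?M = "max M (\<Sum>i\<leftarrow>is. \<bar>i\<bar>)"
    show ?case unfolding bnd_def
    proof (intro exI[of _ ?M] conjI allI impI)
      show "0 \<le> ?M" using M by simp
      fix j assume "j < - ?M"
      then show "phi j (sc c x + y) = 0"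
        using M bnd_foldr[of "is"] x by (simp add: phi_add phi_scale)
    qed
  qed
qed


definition N :: "int \<Rightarrow> int \<Rightarrow> 'v \<Rightarrow> 'v" where
  "N a b v = phi a (phi b v) - sc (dvac (phi a (phi b vac))) v"

lemma N_zero:
  assumes M: "M \<ge> 0" "\<forall>j. j < - M \<longrightarrow> phi j v = 0" and ab: "b < - M \<or> a < - M"
  shows "N a b v = 0"
  using ab
proof
  assume b: "b < - M"
  then have "phi b v = 0" "phi b vac = 0" using M vac_ann by auto
  then show ?thesis by (simp add: N_def)
next
  assume a: "a < - M"
  then have 1: "phi a v = 0" "phi a vac = 0" using M vac_ann by auto
  have "phi a (phi b v) = (if a + b = 0 then sc (sgn1 a) v else 0)"
    using anti[of a b v] 1 by simp
  moreover have "phi a (phi b vac) = (if a + b = 0 then sc (sgn1 a) vac else 0)"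
    using anti[of a b vac] 1 by simp
  ultimately show ?thesis by (simp add: N_def dvac_scale dvac_vac)
qed

lemma N_comm:
  "N a b (phi n v) - phi n (N a b v)
    = (if b + n = 0 then sc (sgn1 b) (phi a v) else 0) - (if a + n = 0 then sc (sgn1 a) (phi b v) else 0)"
proof -
  have 1: "phi b (phi n v) = (if b + n = 0 then sc (sgn1 b) v else 0) - phi n (phi b v)"
    by (rule anti)
  have 2: "phi a (phi n (phi b v)) = (if a + n = 0 then sc (sgn1 a) (phi b v) else 0) - phi n (phi a (phi b v))"
    by (rule anti)
  have "N a b (phi n v) - phi n (N a b v) = phi a (phi b (phi n v)) - phi n (phi a (phi b v))"
    by (simp add: N_def phi_diff phi_scale)
  also have "\<dots> = (if b + n = 0 then sc (sgn1 b) (phi a v) else 0) - (if a + n = 0 then sc (sgn1 a) (phi b v) else 0)"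
    unfolding 1 phi_diff 2 by (simp add: phi_scale)
  finally show ?thesis .
qed

lemma euler_pow: "(euler sc ^^ m) F = (\<lambda>n v. sc (of_int n ^ m) (F n v))"
  by (induction m) (auto simp: euler_def)

lemma iota_pow: "((\<lambda>G. sscale sc (-1) (euler sc G)) ^^ m) F = (\<lambda>n v. sc ((- of_int n) ^ m) (F n v))"
  by (induction m) (auto simp: euler_def sscale_def)

lemma w_act_eq: "w_act sc d phi b v = (\<Sum>(k, m)\<in>w_supp d. sc (d k m * of_int (b - k) ^ m) (phi (b - k) v))"
  unfolding w_act_def euler_pow zmul_def by (simp add: split_def)

lemma iota_act_eq: "iota_act sc d phi n v = (\<Sum>(k, m)\<in>w_supp d. sc (d k m * ((- of_int n) ^ m * sgn1 k)) (phi (n - k) v))"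
  unfolding iota_act_def iota_pow unfolding zmul_def sscale_def by (simp add: split_def mult.commute)

lemma nprod_eq: "nprod2 sc dvac vac phi (w_act sc d phi) a b v
   = (\<Sum>(k, m)\<in>w_supp d. sc (d k m * of_int (b - k) ^ m) (N a (b - k) v))"
proof -
  have "nprod2 sc dvac vac phi (w_act sc d phi) a b v
     = (\<Sum>p\<in>w_supp d. sc (d (fst p) (snd p) * of_int (b - fst p) ^ snd p) (phi a (phi (b - fst p) v)))
       - sc (\<Sum>p\<in>w_supp d. (d (fst p) (snd p) * of_int (b - fst p) ^ snd p) * dvac (phi a (phi (b - fst p) vac))) v"
    unfolding nprod2_def vev_def comp_def w_act_eq split_def
    by (simp only: phi_sum phi_scale dvac_sum dvac_scale)
  also have "\<dots> = (\<Sum>p\<in>w_supp d. sc (d (fst p) (snd p) * of_int (b - fst p) ^ snd p) (N a (b - fst p) v))"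
    unfolding scale_sum_left N_def scale_right_diff_distrib sum_subtractf
    by (simp only: scale_scale)
  finally show ?thesis by (simp only: split_def)
qed


definition T :: "(int \<Rightarrow> nat \<Rightarrow> complex) \<Rightarrow> int \<Rightarrow> 'v \<Rightarrow> 'v" where
  "T d a v = sc (sgn1 a) (\<Sum>p\<in>w_supp d. sc (d (fst p) (snd p) * of_int (- a - fst p) ^ snd p) (N a (- a - fst p) v))"

lemma hatB_eq: "hatB sc dvac vac phi d v = sc (1/2) (Sum_any (\<lambda>a. T d a v))"
  unfolding hatB_def res_def zmul_def subst_neg_def nprod_eq T_def
  by (simp only: split_def diff_0 minus_minus add.right_neutral) simp

lemma T_supp:
  assumes fin: "finite (w_supp d)"
  shows "\<exists>R\<ge>0. (\<forall>a. R < \<bar>a\<bar> \<longrightarrow> T d a v = 0) \<and> (\<forall>p\<in>w_supp d. \<bar>fst p\<bar> \<le> R)"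
proof -
  obtain M where M: "M \<ge> 0" "\<forall>j. j < - M \<longrightarrow> phi j v = 0"
    using bnd_all[of v] unfolding bnd_def by blast
  define K where "K = (\<Sum>p\<in>w_supp d. \<bar>fst p\<bar>)"
  have Kp: "\<bar>fst p\<bar> \<le> K" if "p \<in> w_supp d" for p
    unfolding K_def using fin that by (intro member_le_sum) auto
  have K0: "K \<ge> 0" unfolding K_def by (intro sum_nonneg) auto
  show ?thesis
  proof (intro exI[of _ "M + K"] conjI allI impI ballI)
    show "0 \<le> M + K" using M K0 by simp
  next
    fix p assume "p \<in> w_supp d" then show "\<bar>fst p\<bar> \<le> M + K" using Kp[of p] M by simp
  next
    fix a assume a: "M + K < \<bar>a\<bar>"
    have "N a (- a - fst p) v = 0" if p: "p \<in> w_supp d" for p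
    proof (rule N_zero[OF M])
      show "- a - fst p < - M \<or> a < - M" using a Kp[OF p] by (cases "a \<ge> 0") auto
    qed
    then show "T d a v = 0" unfolding T_def by simp
  qed
qed

lemma comm_a:
  "T d a (phi n v) - phi n (T d a v)
   = (\<Sum>p\<in>w_supp d.
        (if a = n - fst p then sc (sgn1 a * (d (fst p) (snd p) * of_int (- a - fst p) ^ snd p) * sgn1 (- a - fst p)) (phi a v) else 0)
      - (if a = - n then sc (sgn1 a * (d (fst p) (snd p) * of_int (- a - fst p) ^ snd p) * sgn1 a) (phi (- a - fst p) v) else 0))"
proof -
  have "T d a (phi n v) - phi n (T d a v)
     = (\<Sum>p\<in>w_supp d. sc (sgn1 a) (sc (d (fst p) (snd p) * of_int (- a - fst p) ^ snd p)
          (N a (- a - fst p) (phi n v) - phi n (N a (- a - fst p) v))))"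
    unfolding T_def phi_scale phi_sum scale_sum_right scale_right_diff_distrib sum_subtractf ..
  also have "\<dots> = (\<Sum>p\<in>w_supp d.
        (if a = n - fst p then sc (sgn1 a * (d (fst p) (snd p) * of_int (- a - fst p) ^ snd p) * sgn1 (- a - fst p)) (phi a v) else 0)
      - (if a = - n then sc (sgn1 a * (d (fst p) (snd p) * of_int (- a - fst p) ^ snd p) * sgn1 a) (phi (- a - fst p) v) else 0))"
    by (rule sum.cong) (auto simp: N_comm scale_right_diff_distrib)
  finally show ?thesis .
qed


lemma main:
  assumes fin: "finite (w_supp d)"
  shows "hatB sc dvac vac phi d (phi n v) - phi n (hatB sc dvac vac phi d v)
       = sc (- 1/2) (w_act sc d phi n v - iota_act sc d phi n v)"
proof -
  obtain R1 where R1: "R1 \<ge> 0" "\<forall>a. R1 < \<bar>a\<bar> \<longrightarrow> T d a v = 0" "\<forall>p\<in>w_supp d. \<bar>fst p\<bar> \<le> R1"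
    using T_supp[OF fin, of v] by blast
  obtain R2 where R2: "R2 \<ge> 0" "\<forall>a. R2 < \<bar>a\<bar> \<longrightarrow> T d a (phi n v) = 0"
    using T_supp[OF fin, of "phi n v"] by blast
  define R where "R = R1 + R2 + \<bar>n\<bar>"
  define A where "A = {- R..R}"
  have fA: "finite A" unfolding A_def by simp
  have z1: "T d a v = 0" if "a \<notin> A" for a
    using that R1 R2 by (intro R1(2)[rule_format]) (auto simp: A_def R_def)
  have z2: "T d a (phi n v) = 0" if "a \<notin> A" for a
    using that R1 R2 by (intro R2(2)[rule_format]) (auto simp: A_def R_def)
  have e1: "Sum_any (\<lambda>a. T d a v) = sum (\<lambda>a. T d a v) A"
    by (rule Sum_any.expand_superset[OF fA]) (use z1 in blast)
  have e2: "Sum_any (\<lambda>a. T d a (phi n v)) = sum (\<lambda>a. T d a (phi n v)) A"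
    by (rule Sum_any.expand_superset[OF fA]) (use z2 in blast)
  have m1: "n - fst p \<in> A" if "p \<in> w_supp d" for p
    using R1(3) that R2 by (force simp: A_def R_def)
  have m2: "- n \<in> A" using R1 R2 by (auto simp: A_def R_def)
  let ?G = "\<lambda>a p. (if a = n - fst p then sc (sgn1 a * (d (fst p) (snd p) * of_int (- a - fst p) ^ snd p) * sgn1 (- a - fst p)) (phi a v) else 0)
      - (if a = - n then sc (sgn1 a * (d (fst p) (snd p) * of_int (- a - fst p) ^ snd p) * sgn1 a) (phi (- a - fst p) v) else 0)"
  have "hatB sc dvac vac phi d (phi n v) - phi n (hatB sc dvac vac phi d v)
      = sc (1/2) (\<Sum>a\<in>A. T d a (phi n v)) - sc (1/2) (\<Sum>a\<in>A. phi n (T d a v))"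
    by (simp only: hatB_eq e1 e2 phi_scale phi_sum)
  also have "\<dots> = sc (1/2) (\<Sum>a\<in>A. T d a (phi n v) - phi n (T d a v))"
    by (simp only: sum_subtractf scale_right_diff_distrib)
  also have "\<dots> = sc (1/2) (\<Sum>a\<in>A. \<Sum>p\<in>w_supp d. ?G a p)"
    by (simp only: comm_a)
  also have "\<dots> = sc (1/2) (\<Sum>p\<in>w_supp d. \<Sum>a\<in>A. ?G a p)"
    by (subst sum.swap) (rule refl)
  also have "\<dots> = sc (1/2) (\<Sum>p\<in>w_supp d.
        sc (sgn1 (n - fst p) * (d (fst p) (snd p) * of_int (- n) ^ snd p) * sgn1 (- n)) (phi (n - fst p) v)
      - sc (sgn1 (- n) * (d (fst p) (snd p) * of_int (n - fst p) ^ snd p) * sgn1 (- n)) (phi (n - fst p) v))"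
  proof (rule arg_cong[where f = "sc (1/2)"], rule sum.cong[OF refl])
    fix p assume p: "p \<in> w_supp d"
    show "(\<Sum>a\<in>A. ?G a p) = 
        sc (sgn1 (n - fst p) * (d (fst p) (snd p) * of_int (- n) ^ snd p) * sgn1 (- n)) (phi (n - fst p) v)
      - sc (sgn1 (- n) * (d (fst p) (snd p) * of_int (n - fst p) ^ snd p) * sgn1 (- n)) (phi (n - fst p) v)"
      using m1[OF p] m2 fA by (simp add: sum_subtractf)
  qed
  also have "\<dots> = sc (- 1/2) (w_act sc d phi n v - iota_act sc d phi n v)"
    unfolding w_act_eq iota_act_eq split_def scale_sum_right sum_subtractf[symmetric]
  proof (rule sum.cong[OF refl])
    fix p assume p: "p \<in> w_supp d"
    show "sc (1 / 2)
          (sc (sgn1 (n - fst p) * (d (fst p) (snd p) * of_int (- n) ^ snd p) * sgn1 (- n)) (phi (n - fst p) v) -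
           sc (sgn1 (- n) * (d (fst p) (snd p) * of_int (n - fst p) ^ snd p) * sgn1 (- n)) (phi (n - fst p) v)) =
         sc (- 1 / 2)
          (sc (d (fst p) (snd p) * of_int (n - fst p) ^ snd p) (phi (n - fst p) v) -
           sc (d (fst p) (snd p) * ((- of_int n) ^ snd p * sgn1 (fst p))) (phi (n - fst p) v))"
      unfolding scale_left_diff_distrib[symmetric] scale_scale coef_id ..
  qed
  finally show ?thesis .
qed

end

theorem lemma3p3:
  fixes sc :: "complex \<Rightarrow> 'v::ab_group_add \<Rightarrow> 'v"
    and phi :: "'v opser" and vac :: 'v and dvac :: "'v \<Rightarrow> complex"
    and d :: "int \<Rightarrow> nat \<Rightarrow> complex"
  assumes "fockB sc phi vac dvac"
    and "finite (w_supp d)"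
  shows "(\<lambda>n v. hatB sc dvac vac phi d (phi n v) - phi n (hatB sc dvac vac phi d v))
       = sscale sc (- 1/2) (sdiff (w_act sc d phi) (iota_act sc d phi))"
proof -
  interpret fk sc phi vac dvac by (rule fk.intro) (rule assms(1))
  show ?thesis
    unfolding sscale_def sdiff_def using main[OF assms(2)] by (intro ext) simp
qed

end
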